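(* Let $\varphi\in\mathcal I^L$ and let $S=(S_{kl})$ be the symmetric integer matrix with $\varphi_*(b_l)=b_l+\sum_k S_{kl}a_k$. Then for every $x\in D_2(H)$, $$\mu(x,\varphi)=\Big(\tfrac12\omega_S+\omega_\delta\Big)\big(\operatorname{Tr}^{\omega_S}(x)\big).$$
   Context: Let $\Sigma_{g,1}$ be a compact connected oriented surface of genus $g$ with one boundary component, $\mathcal M$ its mapping class group (fixing the boundary pointwise), $H=H_1(\Sigma_{g,1};\mathbb Z)$ with intersection form $\omega$, $\mathcal L(H)$ the free Lie ring on $H$ embedded in $T(H)$ via $[x,y]=x\otimes y-y\otimes x$, and $D_2(H)=\ker(H\otimes\mathcal L_3(H)\to\mathcal L_4(H),\ h\otimes u\mapsto[h,u])$. Let $V_g$ be a handlebody with $\Sigma_{g,1}\subset\partial V_g$; $A=\ker(H\to H_1(V_g;\mathbb Z))$. The Lagrangian Torelli group is $\mathcal I^L:=\{\varphi\in\mathcal M:\varphi_*(A)\subset A,\ \varphi_*|_A=\mathrm{id}\}$. Let $j:\Sigma_{g,1}\to S^3$ be a Heegaard embedding (i.e. $j(\Sigma_{g,1})$ is a genus-$g$ Heegaard surface minus an open disk, splitting $S^3$ into inner handlebody $\overline V$ and outer $\overline W$, oriented from $\overline V$) which extends to $V_g$ with $j(V_g)=\overline V$; $j^+$ is $j$ pushed into $\overline W$. Fix a symplectic basis $(a_1,\dots,a_g,b_1,\dots,b_g)$ of $H$ (classes of meridians and parallels of $\overline V$, pulled back by $j$) with $a_i\in A$, such that $\operatorname{lk}(j_*(x),j^+_*(y))=\omega_\delta(x,y)$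 for all $x,y\in H$, where $\omega_\delta$ is the bilinear form on $H$ with $\omega_\delta(b_i,a_k)=\delta_{ik}$ and $\omega_\delta$ vanishing on all other pairs of basis vectors. For a symmetric matrix $S$, $\omega_S$ is the bilinear form on $H$ with $\omega_S(b_k,b_l)=S_{kl}$ and $\omega_S(a_k,\cdot)=\omega_S(\cdot,a_k)=0$; a bilinear form $\beta$ is applied to $H\otimes H$ by $x\otimes y\mapsto\beta(x,y)$. $\operatorname{Tr}^{\omega_S}:D_2(H)\to H^{\otimes2}$ is the composite $D_2(H)\subset H\otimes\mathcal L_3(H)\subset H^{\otimes4}\to H^{\otimes2}$, $x_1\otimes x_2\otimes x_3\otimes x_4\mapsto\omega_S(x_1,x_2)\,x_3\otimes x_4$. With $x\leftrightarrow y:=x\otimes y+y\otimes x$, $T(a,b;c,d):=a\otimes[b,[c,d]]+b\otimes[[c,d],a]+c\otimes[d,[a,b]]+d\otimes[[a,b],c]$, $a\odot b:=a\otimes[b,[a,b]]+b\otimes[[a,b],a]$, let $\Psi:(\Lambda^2H\otimes\Lambda^2H)^{\mathfrak S_2}\to D_2(H)$ be the surjection $(a\wedge b)\leftrightarrow(c\wedge d)\mapsto T(a,b;c,d)$, $(a\wedge b)\otimes(a\wedge b)\mapsto a\odot b$. Let $\mathcal C$ be the commutative unital ring generated by $l(u,v)$ ($u,v\in H$), linear in $u$, with $l(v,u)=l(u,v)+\omega(u,v)$; for a Heegaard embedding $k$, $\varepsilon_k:\mathcal C\to\mathbb Z$ is the ring map $l(u,v)\mapsto\operatorname{lk}(k_*(u),k^+_*(v))$;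 $\theta:(\Lambda^2H\otimes\Lambda^2H)^{\mathfrak S_2}\to\mathcal C$ is given by $(u\wedge v)\otimes(u\wedge v)\mapsto l(u,u)l(v,v)-l(u,v)l(v,u)$ and $(a\wedge b)\leftrightarrow(c\wedge d)\mapsto l(a,c)l(b,d)-l(a,d)l(b,c)-l(d,a)l(c,b)+l(c,a)l(d,b)$. Finally $\mu:D_2(H)\times\mathcal M\to\mathbb Z$ is the (well-defined) map $\mu(\Psi(x),\varphi)=(\varepsilon_j-\varepsilon_{j\circ\varphi})(\theta(x))$. *)

theory Defs
  imports Complex_Main "HOL-Library.Function_Algebras"
begin

text \<open>The genus index set is a finite type 'g (g = CARD('g)).
 H = Z^{2g} with symplectic basis a_i = e(Inl i), b_i = e(Inr i).\<close>

type_synonym 'g idx = "'g + 'g"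
type_synonym 'g vec = "'g idx \<Rightarrow> int"
type_synonym 'g ten2 = "'g idx \<times> 'g idx \<Rightarrow> int"
type_synonym 'g ten3 = "'g idx \<times> 'g idx \<times> 'g idx \<Rightarrow> int"
type_synonym 'g ten4 = "'g idx \<times> 'g idx \<times> 'g idx \<times> 'g idx \<Rightarrow> int"

definition basis_e :: "'g idx \<Rightarrow> 'g vec" where
  "basis_e k = (\<lambda>j. if j = k then 1 else 0)"

definition avec :: "'g \<Rightarrow> 'g vec" where "avec i = basis_e (Inl i)"
definition bvec :: "'g \<Rightarrow> 'g vec" where "bvec i = basis_e (Inr i)"

definition scal :: "int \<Rightarrow> 'g vec \<Rightarrow> 'g vec" where
  "scal c v = (\<lambda>j. c * v j)"

definition br2 :: "'g vec \<Rightarrow> 'g vec \<Rightarrow> 'g ten2" where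
  "br2 x y = (\<lambda>(i,j). x i * y j - y i * x j)"

definition br12 :: "'g vec \<Rightarrow> 'g ten2 \<Rightarrow> 'g ten3" where
  "br12 x t = (\<lambda>(i,j,k). x i * t (j,k) - t (i,j) * x k)"

definition br21 :: "'g ten2 \<Rightarrow> 'g vec \<Rightarrow> 'g ten3" where
  "br21 t x = (\<lambda>(i,j,k). t (i,j) * x k - x i * t (j,k))"

definition tens13 :: "'g vec \<Rightarrow> 'g ten3 \<Rightarrow> 'g ten4" where
  "tens13 h u = (\<lambda>(i,j,k,l). h i * u (j,k,l))"

definition Tgen :: "'g vec \<Rightarrow> 'g vec \<Rightarrow> 'g vec \<Rightarrow> 'g vec \<Rightarrow> 'g ten4" where
  "Tgen a b c d =
     tens13 a (br12 b (br2 c d)) + tens13 b (br21 (br2 c d) a)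
   + tens13 c (br12 d (br2 a b)) + tens13 d (br21 (br2 a b) c)"

definition odot :: "'g vec \<Rightarrow> 'g vec \<Rightarrow> 'g ten4" where
  "odot a b = tens13 a (br12 b (br2 a b)) + tens13 b (br21 (br2 a b) a)"

text \<open>Generators of (\<Lambda>^2H \<otimes> \<Lambda>^2H)^{S_2}:
  Sq u v = (u\<and>v)\<otimes>(u\<and>v),  Sw a b c d = (a\<and>b) \<leftrightarrow> (c\<and>d).
  An element is presented as a finite Z-linear combination of generators.\<close>
datatype 'v gen = Sq 'v 'v | Sw 'v 'v 'v 'v

fun Psi_gen :: "'g vec gen \<Rightarrow> 'g ten4" where
  "Psi_gen (Sq u v) = odot u v"
| "Psi_gen (Sw a b c d) = Tgen a b c d"

definition Psi :: "(int \<times> 'g vec gen) list \<Rightarrow> 'g ten4" where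
  "Psi xs = sum_list (map (\<lambda>(c,x). (\<lambda>t. c * Psi_gen x t)) xs)"

text \<open>\<epsilon>(\<theta>(x)) where \<epsilon> sends l(u,v) to L u v.\<close>
fun theta_eval_gen :: "('v \<Rightarrow> 'v \<Rightarrow> int) \<Rightarrow> 'v gen \<Rightarrow> int" where
  "theta_eval_gen L (Sq u v) = L u u * L v v - L u v * L v u"
| "theta_eval_gen L (Sw a b c d) =
     L a c * L b d - L a d * L b c - L d a * L c b + L c a * L d b"

definition theta_eval :: "('v \<Rightarrow> 'v \<Rightarrow> int) \<Rightarrow> (int \<times> 'v gen) list \<Rightarrow> int" where
  "theta_eval L xs = sum_list (map (\<lambda>(c,x). c * theta_eval_gen L x) xs)"

definition deltaM :: "'g idx \<Rightarrow> 'g idx \<Rightarrow> int" where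
  "deltaM p q = (case (p,q) of (Inr i, Inl k) \<Rightarrow> (if i = k then 1 else 0) | _ \<Rightarrow> 0)"

definition SM :: "('g \<Rightarrow> 'g \<Rightarrow> int) \<Rightarrow> 'g idx \<Rightarrow> 'g idx \<Rightarrow> int" where
  "SM S p q = (case (p,q) of (Inr k, Inr l) \<Rightarrow> S k l | _ \<Rightarrow> 0)"

definition form_vec :: "('g idx \<Rightarrow> 'g idx \<Rightarrow> int) \<Rightarrow> 'g vec \<Rightarrow> 'g vec \<Rightarrow> int" where
  "form_vec B u v = (\<Sum>p\<in>UNIV. \<Sum>q\<in>UNIV. B p q * u p * v q)"

definition omega_delta :: "'g::finite vec \<Rightarrow> 'g vec \<Rightarrow> int" where
  "omega_delta = form_vec deltaM"

definition form_ten :: "('g idx \<Rightarrow> 'g idx \<Rightarrow> int) \<Rightarrow> 'g ten2 \<Rightarrow> int" where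
  "form_ten B T = (\<Sum>p\<in>UNIV. \<Sum>q\<in>UNIV. B p q * T (p,q))"

definition TrS :: "('g::finite \<Rightarrow> 'g \<Rightarrow> int) \<Rightarrow> 'g ten4 \<Rightarrow> 'g ten2" where
  "TrS S X = (\<lambda>(k,l). \<Sum>i\<in>UNIV. \<Sum>j\<in>UNIV. SM S i j * X (i,j,k,l))"

text \<open>\<mu>(\<Psi>(x),\<phi>) = (\<epsilon>_j - \<epsilon>_{j\<circ>\<phi>})(\<theta>(x)), where
  lk(j_*u, j^+_*v) = \<omega>_\<delta>(u,v) and lk((j\<phi>)_*u,(j\<phi>)^+_*v) = \<omega>_\<delta>(\<phi>_*u,\<phi>_*v).\<close>
definition mu_rep :: "('g::finite vec \<Rightarrow> 'g vec) \<Rightarrow> (int \<times> 'g vec gen) list \<Rightarrow> int" where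
  "mu_rep phi xs = theta_eval omega_delta xs
                 - theta_eval (\<lambda>u v. omega_delta (phi u) (phi v)) xs"

end

theory Submission
  imports Defs
begin

lemma sum_UNIV_plus:
  "(\<Sum>p\<in>(UNIV::('a::finite+'b::finite) set). f p) = (\<Sum>i\<in>UNIV. f (Inl i)) + (\<Sum>i\<in>UNIV. f (Inr i))"
  by (subst UNIV_Plus_UNIV[symmetric], subst sum.Plus) auto

lemma if_mult1: "((if P then 1 else 0) * (a::int)) * b = (if P then a * b else 0)" by simp

lemma fv_delta: "form_vec deltaM (x::'g::finite vec) y = (\<Sum>i\<in>UNIV. x (Inr i) * y (Inl i))"
  unfolding form_vec_def sum_UNIV_plus
  by (simp add: deltaM_def if_mult1 sum.delta)

lemma fv_SM: "form_vec (SM S) (x::'g::finite vec) y = (\<Sum>k\<in>UNIV. \<Sum>l\<in>UNIV. S k l * x (Inr k) * y (Inr l))"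
  unfolding form_vec_def sum_UNIV_plus
  by (simp add: SM_def)

lemma fv_SM_sym: assumes "\<And>k l. S k l = S l k"
  shows "form_vec (SM S) (x::'g::finite vec) y = form_vec (SM S) y x"
  unfolding fv_SM by (subst sum.swap) (simp add: assms mult_ac)

definition Q :: "('g::finite idx \<Rightarrow> 'g idx \<Rightarrow> int) \<Rightarrow> ('g \<Rightarrow> 'g \<Rightarrow> int) \<Rightarrow> 'g ten4 \<Rightarrow> int" where
  "Q B S X = (\<Sum>p\<in>UNIV. \<Sum>q\<in>UNIV. \<Sum>i\<in>UNIV. \<Sum>j\<in>UNIV. B p q * (SM S i j * X (i,j,p,q)))"

lemma Q_eq: "form_ten B (TrS S X) = Q B S X"
  unfolding form_ten_def TrS_def Q_def by (simp add: sum_distrib_left)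

lemma Q_add: "Q B S (X + Y) = Q B S X + Q B S Y"
  unfolding Q_def by (simp add: algebra_simps sum.distrib)
lemma Q_diff: "Q B S (X - Y) = Q B S X - Q B S Y"
  unfolding Q_def by (simp add: algebra_simps sum_subtractf)
lemma Q_scale: "Q B S (\<lambda>t. c * X t) = c * Q B S X"
  unfolding Q_def by (simp add: algebra_simps sum_distrib_left)
lemma Q_zero: "Q B S (\<lambda>a. 0) = 0"
  unfolding Q_def by simp

definition R :: "'g vec \<Rightarrow> 'g vec \<Rightarrow> 'g vec \<Rightarrow> 'g vec \<Rightarrow> 'g ten4" where
  "R w x y z = (\<lambda>(i,j,k,l). w i * x j * y k * z l)"

lemma Q_R: "Q B S (R w x y z) = form_vec (SM S) w x * form_vec B y z"
proof -
  have "\<And>p q. (\<Sum>i\<in>UNIV. \<Sum>j\<in>UNIV. B p q * (SM S i j * (w i * x j * y p * z q)))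
     = (B p q * y p * z q) * form_vec (SM S) w x"
    unfolding form_vec_def by (simp add: sum_distrib_left mult_ac)
  then show ?thesis unfolding Q_def R_def
    by (simp add: form_vec_def sum_distrib_right mult_ac)
qed

lemma sum_fun_apply: "(\<Sum>p\<in>A. f p) (j::'b) = (\<Sum>p\<in>A. (f p j :: int))"
  by (induction A rule: infinite_finite_induct) auto

lemma mult_if1: "(a::int) * (if P then 1 else 0) = (if P then a else 0)" by simp

lemma vec_decomp: "(v::'g::finite vec) = (\<Sum>p\<in>UNIV. scal (v p) (basis_e p))"
  by (rule ext) (simp add: sum_fun_apply scal_def basis_e_def mult_if1 sum.delta')

locale philin =
  fixes phi :: "'g::finite vec \<Rightarrow> 'g vec" and S :: "'g \<Rightarrow> 'g \<Rightarrow> int"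
  assumes phi_add: "\<And>u v. phi (u + v) = phi u + phi v"
    and phi_a: "\<And>i. phi (avec i) = avec i"
    and phi_b: "\<And>l. phi (bvec l) = bvec l + (\<Sum>k\<in>UNIV. scal (S k l) (avec k))"
begin

lemma phi0: "phi 0 = 0"
  using phi_add[of 0 0] by simp

lemma phi_sum: "phi (\<Sum>p\<in>A. f p) = (\<Sum>p\<in>A. phi (f p))"
  apply (induction A rule: infinite_finite_induct)
    apply (metis sum.infinite phi0)
   apply (metis sum.empty phi0)
  apply (metis sum.insert phi_add)
  done

lemma phi_uminus: "phi (- v) = - phi v"
  using phi_add[of v "-v"] by (metis phi0 neg_eq_iff_add_eq_0 add.right_inverse)

lemma phi_scal_nat: "phi (scal (int n) v) = scal (int n) (phi v)"
proof (induction n)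
  case 0 then show ?case by (simp add: scal_def phi0[unfolded zero_fun_def])
next
  case (Suc n)
  have "scal (int (Suc n)) v = scal (int n) v + v" by (rule ext) (simp add: scal_def algebra_simps)
  moreover have "scal (int (Suc n)) (phi v) = scal (int n) (phi v) + phi v" by (rule ext) (simp add: scal_def algebra_simps)
  ultimately show ?case using Suc by (metis phi_add)
qed

lemma phi_scal: "phi (scal c v) = scal c (phi v)"
proof (cases c rule: int_cases)
  case (nonneg n) then show ?thesis by (simp add: phi_scal_nat)
next
  case (neg n)
  have "scal c v = - scal (int (Suc n)) v" "scal c (phi v) = - scal (int (Suc n)) (phi v)"
    unfolding neg scal_def by (rule ext, simp only: uminus_apply mult_minus_left)+
  then show ?thesis by (metis phi_uminus phi_scal_nat)
qed

lemma phi_comp: "phi v j = v j + (case j of Inl k \<Rightarrow> (\<Sum>l\<in>UNIV. S k l * v (Inr l)) | Inr _ \<Rightarrow> 0)"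
proof -
  have "phi v = phi (\<Sum>p\<in>UNIV. scal (v p) (basis_e p))"
    by (rule arg_cong[of _ _ phi, OF vec_decomp[of v]])
  also have "\<dots> = (\<Sum>p\<in>UNIV. scal (v p) (phi (basis_e p)))"
    by (simp only: phi_sum phi_scal)
  finally have "phi v j = (\<Sum>p\<in>UNIV. v p * phi (basis_e p) j)"
    by (simp add: sum_fun_apply scal_def)
  also have "\<dots> = (\<Sum>i\<in>UNIV. v (Inl i) * basis_e (Inl i) j) + (\<Sum>l\<in>UNIV. v (Inr l) * (basis_e (Inr l) j + (\<Sum>k\<in>UNIV. S k l * basis_e (Inl k) j)))"
    unfolding sum_UNIV_plus using phi_a[unfolded avec_def] phi_b[unfolded bvec_def avec_def]
    by (simp add: sum_fun_apply scal_def)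
  also have "\<dots> = v j + (case j of Inl k \<Rightarrow> (\<Sum>l\<in>UNIV. S k l * v (Inr l)) | Inr _ \<Rightarrow> 0)"
    by (cases j) (auto simp: basis_e_def algebra_simps sum.distrib mult_if1 sum.delta sum.delta')
  finally show ?thesis .
qed

lemma omega_phi: "omega_delta (phi u) (phi v) = omega_delta u v + form_vec (SM S) u v"
  unfolding omega_delta_def fv_delta fv_SM phi_comp
  by (simp add: algebra_simps sum.distrib sum_distrib_left)

end

lemma odot_R: "odot u v = R u v u v + R u v u v - R u v v u - R u u v v
    + R v u v u + R v u v u - R v v u u - R v u u v"
  by (rule ext) (auto simp: odot_def tens13_def br12_def br21_def br2_def R_def algebra_simps)

lemma Tgen_R: "Tgen a b c d = R a b c d - R a b d c - R a c d b + R a d c b + R b c d a - R b d c a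
  - R b a c d + R b a d c + R c d a b - R c d b a - R c a b d + R c b a d + R d a b c
  - R d b a c - R d c a b + R d c b a"
  by (rule ext) (auto simp: Tgen_def tens13_def br12_def br21_def br2_def R_def algebra_simps)

lemma gen_case:
  fixes S :: "'g::finite \<Rightarrow> 'g \<Rightarrow> int" and g :: "'g vec gen"
  assumes S_sym: "\<And>k l. S k l = S l k"
  shows "2 * (theta_eval_gen omega_delta g
         - theta_eval_gen (\<lambda>u v. omega_delta u v + form_vec (SM S) u v) g)
       = Q (SM S) S (Psi_gen g) + 2 * Q deltaM S (Psi_gen g)"
proof (cases g)
  case (Sq u v)
  have sy: "form_vec (SM S) v u = form_vec (SM S) u v" by (rule fv_SM_sym[OF S_sym])
  show ?thesis unfolding Sq Psi_gen.simps odot_R Q_add Q_diff Q_R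
    by (simp add:  Q_add Q_diff Q_R sy omega_delta_def[symmetric] algebra_simps)
next
  case (Sw a b c d)
  have sy: "form_vec (SM S) b a = form_vec (SM S) a b" "form_vec (SM S) c a = form_vec (SM S) a c"
     "form_vec (SM S) d a = form_vec (SM S) a d" "form_vec (SM S) c b = form_vec (SM S) b c"
     "form_vec (SM S) d b = form_vec (SM S) b d" "form_vec (SM S) d c = form_vec (SM S) c d"
    by (rule fv_SM_sym[OF S_sym])+
  show ?thesis unfolding Sw
    by (simp add: Tgen_R Q_add Q_diff Q_R sy omega_delta_def[symmetric] algebra_simps)
qed

lemma main_int:
  fixes S :: "'g::finite \<Rightarrow> 'g \<Rightarrow> int" and xs :: "(int \<times> 'g vec gen) list"
  assumes S_sym: "\<And>k l. S k l = S l k"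
  shows "2 * (theta_eval omega_delta xs
         - theta_eval (\<lambda>u v. omega_delta u v + form_vec (SM S) u v) xs)
       = Q (SM S) S (Psi xs) + 2 * Q deltaM S (Psi xs)"
proof (induction xs)
  case Nil then show ?case by (simp add: theta_eval_def Psi_def Q_zero)
next
  case (Cons p xs)
  obtain c g where p: "p = (c, g)" by force
  have P: "Psi (p # xs) = (\<lambda>t. c * Psi_gen g t) + Psi xs" by (simp add: Psi_def p)
  have T: "\<And>L. theta_eval L (p # xs) = c * theta_eval_gen L g + theta_eval L xs"
    by (simp add: theta_eval_def p)
  have gc: "c * (2 * (theta_eval_gen omega_delta g
         - theta_eval_gen (\<lambda>u v. omega_delta u v + form_vec (SM S) u v) g))
       = c * (Q (SM S) S (Psi_gen g) + 2 * Q deltaM S (Psi_gen g))"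
    using gen_case[of S g, OF S_sym] by simp
  show ?case unfolding P T Q_add Q_scale using Cons gc
    by (simp add: algebra_simps)
qed

theorem corollary4p17:
  fixes phi :: "'g::finite vec \<Rightarrow> 'g vec"
    and S :: "'g \<Rightarrow> 'g \<Rightarrow> int"
    and xs :: "(int \<times> 'g vec gen) list"
  assumes phi_add: "\<And>u v. phi (u + v) = phi u + phi v"
    and phi_a: "\<And>i. phi (avec i) = avec i"
    and phi_b: "\<And>l. phi (bvec l) = bvec l + (\<Sum>k\<in>UNIV. scal (S k l) (avec k))"
    and S_sym: "\<And>k l. S k l = S l k"
  shows "(of_int (mu_rep phi xs) :: rat)
         = (1/2) * of_int (form_ten (SM S) (TrS S (Psi xs)))
           + of_int (form_ten deltaM (TrS S (Psi xs)))"
proof -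
  interpret philin phi S using phi_add phi_a phi_b by unfold_locales
  have L: "(\<lambda>u v. omega_delta (phi u) (phi v)) = (\<lambda>u v. omega_delta u v + form_vec (SM S) u v)"
    by (simp add: omega_phi)
  have m: "2 * mu_rep phi xs = form_ten (SM S) (TrS S (Psi xs)) + 2 * form_ten deltaM (TrS S (Psi xs))"
    unfolding mu_rep_def L Q_eq using main_int[of S xs, OF S_sym] by simp
  have "(of_int (2 * mu_rep phi xs) :: rat) = of_int (form_ten (SM S) (TrS S (Psi xs)) + 2 * form_ten deltaM (TrS S (Psi xs)))"
    using m by simp
  then show ?thesis by simp
qed

end
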